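(* For every $q\in X^*\setminus\{e\}$, the star root $\sqrt[*]{P_q}$ is a suffix code, i.e. no word of $\sqrt[*]{P_q}$ is a proper suffix of another word of $\sqrt[*]{P_q}$.
   Context: $X$ is a finite alphabet; $X^*$ the finite words (empty word $e$); $w\sqsubseteq\eta$ means $w$ is a prefix of $\eta$, $w\sqsubset\eta$ a proper prefix. $P_q:=\{v: e\sqsubset v\sqsubseteq q\sqsubset v\cdot q\}$. The star root of $P_q$ is $\sqrt[*]{P_q}:=P_q\setminus(P_q^2\cdot P_q^* )$, i.e. the elements of $P_q$ that are not a concatenation of two or more elements of $P_q$. *)

theory Defs
  imports Main "HOL-Library.Sublist"
begin

definition P :: "'a list \<Rightarrow> 'a list set" where
  "P q = {v. [] \<noteq> v \<and> prefix v q \<and> strict_prefix q (v @ q)}"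

text \<open>Concatenations of two or more elements of A, i.e. A^2 A^*.\<close>
definition concat2 :: "'a list set \<Rightarrow> 'a list set" where
  "concat2 A = {concat ws | ws. 2 \<le> length ws \<and> set ws \<subseteq> A}"

definition star_root :: "'a list set \<Rightarrow> 'a list set" where
  "star_root A = A - concat2 A"

end

theory Submission
  imports Defs
begin

lemma key:
  assumes u: "u \<in> P q" and v: "v \<in> P q" and s: "v = x @ u" and x: "x \<noteq> []"
  shows "x \<in> P q"
proof -
  from u obtain t where t: "u @ q = q @ t" unfolding P_def strict_prefix_def prefix_def by auto
  from v have "prefix q (x @ u @ q)" using s unfolding P_def strict_prefix_def by auto
  hence "prefix q ((x @ q) @ t)" using t by simp
  hence "prefix q (x @ q)"
  proof -
    have "\<not> (\<exists>us. q = (x @ q) @ us)"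
    proof
      assume "\<exists>us. q = (x @ q) @ us"
      then obtain us where "q = (x @ q) @ us" by blast
      hence "length q = length x + length q + length us" by (metis length_append)
      thus False using x by simp
    qed
    thus ?thesis using \<open>prefix q ((x @ q) @ t)\<close> unfolding prefix_append by blast
  qed
  moreover have "prefix x q" using v s unfolding P_def by (auto intro: prefix_order.trans[OF prefixI[of _ _ u]])
  ultimately show ?thesis using x unfolding P_def strict_prefix_def by auto
qed

theorem corollary5:
  fixes q :: "'a::finite list"
  assumes "q \<noteq> []"
  shows "\<forall>u \<in> star_root (P q). \<forall>v \<in> star_root (P q). \<not> strict_suffix u v"
proof (intro ballI notI)
  fix u v assume u: "u \<in> star_root (P q)" and v: "v \<in> star_root (P q)" and su: "strict_suffix u v"
  from su obtain x where s: "v = x @ u" and x: "x \<noteq> []"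
    unfolding strict_suffix_def suffix_def by auto
  have uP: "u \<in> P q" and vP: "v \<in> P q" using u v unfolding star_root_def by auto
  have xP: "x \<in> P q" using key[OF uP vP s x] .
  have "v \<in> concat2 (P q)" unfolding concat2_def
    by (rule CollectI, rule exI[of _ "[x,u]"]) (use s xP uP in auto)
  thus False using v unfolding star_root_def by auto
qed

end
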